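(* Let $(X,\mathcal{A},\mu)$ be a probability space and $\theta$ a measure-preserving endomorphism. Let $\varphi,\psi:X\to\mathbb{R}$ be bounded ceiling functions and let $A\subset X$ be a hole for which the escape rates $\rho(A,\varphi)$ and $\rho(A,\psi)$ exist. Then: (1) If $\varphi\le\psi$, then $\rho(A,\varphi)\ge\rho(A,\psi)$. (2) For all $\lambda>0$, $\rho(A,\lambda\varphi)=\lambda^{-1}\rho(A,\varphi)$. (3) If there is a bounded measurable $\chi:X\to\mathbb{R}$ with $\psi=\varphi+\chi\circ\theta-\chi$, then $\rho(A,\psi)=\rho(A,\varphi)$.
   Context: A ceiling function is a measurable $\varphi:X\to\mathbb{R}$ with $\inf\varphi>0$. $S_n\varphi=\sum_{k=0}^{n-1}\varphi\circ\theta^k$, $N_t^\varphi(x)=\min\{n\in\mathbb{N}_0:S_n\varphi(x)>t\}$. The special flow over $\theta$ under $\varphi$: $\overline{X}_\varphi=\{(x,s):0\le s<\varphi(x)\}$ with $\overline{\mu}_\varphi$ the restriction of $\mu\otimes$Lebesgue, $\Phi^\varphi_t(x,s)=(x,s+t)$ if $t<\varphi(x)-s$ and $\Phi^\varphi_t(x,s)=(\theta^{N-1}x,s+t-S_{N-1}\varphi(x))$, $N=N^\varphi_{s+t}(x)$, otherwise. A hole $A\subset X$ is a measurable set with $\bigcup_{n\ge0}\theta^{-n}(A)=X$ a.e. The escape rate $\rho(A,\varphi)$ is $\lim_{t\to\infty}-\frac1t\log\overline{\mu}_\varphi(\{(x,s)\in\overline{X}_\varphi:\forall\tau\in[0,t]:\Phi^\varphi_\tau(x,s)\notin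 A\times\mathbb{R}\})$ when the limit exists. *)

theory Defs
  imports "HOL-Probability.Probability"
begin

definition measure_preserving_endo :: "'a measure \<Rightarrow> ('a \<Rightarrow> 'a) \<Rightarrow> bool" where
  "measure_preserving_endo M \<theta> \<longleftrightarrow> \<theta> \<in> M \<rightarrow>\<^sub>M M \<and>
     (\<forall>B\<in>sets M. emeasure M (\<theta> -` B \<inter> space M) = emeasure M B)"

definition birkhoff_sum :: "('a \<Rightarrow> 'a) \<Rightarrow> ('a \<Rightarrow> real) \<Rightarrow> nat \<Rightarrow> 'a \<Rightarrow> real" where
  "birkhoff_sum \<theta> \<phi> n x = (\<Sum>k<n. \<phi> ((\<theta> ^^ k) x))"

definition lap_number :: "('a \<Rightarrow> 'a) \<Rightarrow> ('a \<Rightarrow> real) \<Rightarrow> real \<Rightarrow> 'a \<Rightarrow> nat" where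
  "lap_number \<theta> \<phi> t x = (LEAST n. birkhoff_sum \<theta> \<phi> n x > t)"

definition ceiling_fun :: "'a measure \<Rightarrow> ('a \<Rightarrow> real) \<Rightarrow> bool" where
  "ceiling_fun M \<phi> \<longleftrightarrow> \<phi> \<in> borel_measurable M \<and> (\<exists>c>0. \<forall>x\<in>space M. c \<le> \<phi> x)"

definition bounded_fun :: "'a measure \<Rightarrow> ('a \<Rightarrow> real) \<Rightarrow> bool" where
  "bounded_fun M f \<longleftrightarrow> (\<exists>B. \<forall>x\<in>space M. \<bar>f x\<bar> \<le> B)"

definition special_flow_space :: "'a measure \<Rightarrow> ('a \<Rightarrow> real) \<Rightarrow> ('a \<times> real) set" where
  "special_flow_space M \<phi> = {(x, s). x \<in> space M \<and> 0 \<le> s \<and> s < \<phi> x}"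

definition special_flow :: "('a \<Rightarrow> 'a) \<Rightarrow> ('a \<Rightarrow> real) \<Rightarrow> real \<Rightarrow> 'a \<times> real \<Rightarrow> 'a \<times> real" where
  "special_flow \<theta> \<phi> t p = (case p of (x, s) \<Rightarrow>
     if t < \<phi> x - s then (x, s + t)
     else (let N = lap_number \<theta> \<phi> (s + t) x in
           ((\<theta> ^^ (N - 1)) x, s + t - birkhoff_sum \<theta> \<phi> (N - 1) x)))"

definition hole :: "'a measure \<Rightarrow> ('a \<Rightarrow> 'a) \<Rightarrow> 'a set \<Rightarrow> bool" where
  "hole M \<theta> A \<longleftrightarrow> A \<in> sets M \<and> (AE x in M. \<exists>n. (\<theta> ^^ n) x \<in> A)"

definition survivor_set :: "'a measure \<Rightarrow> ('a \<Rightarrow> 'a) \<Rightarrow> ('a \<Rightarrow> real) \<Rightarrow> 'a set \<Rightarrow> real \<Rightarrow> ('a \<times> real) set" where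
  "survivor_set M \<theta> \<phi> A t = {p \<in> special_flow_space M \<phi>. \<forall>\<tau>\<in>{0..t}. fst (special_flow \<theta> \<phi> \<tau> p) \<notin> A}"

definition survival :: "'a measure \<Rightarrow> ('a \<Rightarrow> 'a) \<Rightarrow> ('a \<Rightarrow> real) \<Rightarrow> 'a set \<Rightarrow> real \<Rightarrow> real" where
  "survival M \<theta> \<phi> A t = measure (M \<Otimes>\<^sub>M lborel) (survivor_set M \<theta> \<phi> A t)"

text \<open>-(1/t) log of the survival measure, in the extended reals (log 0 = -infinity).\<close>
definition escape_quot :: "'a measure \<Rightarrow> ('a \<Rightarrow> 'a) \<Rightarrow> ('a \<Rightarrow> real) \<Rightarrow> 'a set \<Rightarrow> real \<Rightarrow> ereal" where
  "escape_quot M \<theta> \<phi> A t =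
     (if survival M \<theta> \<phi> A t > 0 then ereal (- ln (survival M \<theta> \<phi> A t) / t) else \<infinity>)"

definition has_escape_rate :: "'a measure \<Rightarrow> ('a \<Rightarrow> 'a) \<Rightarrow> ('a \<Rightarrow> real) \<Rightarrow> 'a set \<Rightarrow> ereal \<Rightarrow> bool" where
  "has_escape_rate M \<theta> \<phi> A r \<longleftrightarrow> ((\<lambda>t. escape_quot M \<theta> \<phi> A t) \<longlongrightarrow> r) at_top"

end

theory Submission imports Defs begin

lemma funpow_meas: "\<theta> \<in> M \<rightarrow>\<^sub>M M \<Longrightarrow> (\<theta> ^^ k) \<in> M \<rightarrow>\<^sub>M M"
  by (induction k) auto

locale ceil =
  fixes M :: "'a measure" and \<theta> :: "'a \<Rightarrow> 'a" and \<phi> :: "'a \<Rightarrow> real" and c :: real and A :: "'a set"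
  assumes th[measurable]: "\<theta> \<in> M \<rightarrow>\<^sub>M M" and phim[measurable]: "\<phi> \<in> borel_measurable M"
    and cpos: "c > 0" and phic: "\<And>x. x \<in> space M \<Longrightarrow> c \<le> \<phi> x" and Am[measurable]: "A \<in> sets M"
begin

abbreviation S where "S \<equiv> birkhoff_sum \<theta> \<phi>"
abbreviation N where "N \<equiv> lap_number \<theta> \<phi>"

definition E :: "real \<Rightarrow> 'a set" where
  "E u = {x \<in> space M. \<forall>k < N u x. (\<theta>^^k) x \<notin> A}"

lemma orb_space: "x \<in> space M \<Longrightarrow> (\<theta>^^k) x \<in> space M"
  by (rule measurable_space[OF funpow_meas[OF th]])

lemma S_Suc: "S (Suc n) x = S n x + \<phi> ((\<theta>^^n) x)"
  by (simp add: birkhoff_sum_def)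

lemma S0[simp]: "S 0 x = 0" by (simp add: birkhoff_sum_def)
lemma S1: "S (Suc 0) x = \<phi> x" by (simp add: birkhoff_sum_def)

lemma S_lower: "x \<in> space M \<Longrightarrow> S n x \<ge> real n * c"
proof (induction n)
  case (Suc n) then show ?case using phic[OF orb_space[OF Suc.prems, of n]] by (simp add: S_Suc algebra_simps)
qed simp

lemma S_mono: assumes "x \<in> space M" "j \<le> k" shows "S j x \<le> S k x"
  using assms(2)
proof (induction k)
  case (Suc k) then show ?case using phic[OF orb_space[OF assms(1), of k]] cpos
    by (cases "j = Suc k") (auto simp: S_Suc)
qed simp

lemma S_ex: assumes "x \<in> space M" shows "\<exists>n. S n x > u"
proof -
  obtain n :: nat where "real n > u / c" using reals_Archimedean2 by blast
  then have "real n * c > u" using cpos by (simp add: field_simps)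
  then show ?thesis using S_lower[OF assms, of n] by (meson less_le_trans)
qed

lemma N_gt: "x \<in> space M \<Longrightarrow> S (N u x) x > u"
  unfolding lap_number_def by (rule LeastI_ex[OF S_ex])

lemma N_less: "k < N u x \<Longrightarrow> S k x \<le> u"
  unfolding lap_number_def using not_less_Least by fastforce

lemma N_le: "S n x > u \<Longrightarrow> N u x \<le> n"
  unfolding lap_number_def by (rule Least_le)

lemma N_mono: "x \<in> space M \<Longrightarrow> u \<le> v \<Longrightarrow> N u x \<le> N v x"
  using N_gt[of x v] by (intro N_le) auto

lemma N_pos: "x \<in> space M \<Longrightarrow> 0 \<le> u \<Longrightarrow> N u x \<ge> 1"
  using N_gt[of x u] by (cases "N u x") auto

lemma N_eq1: "x \<in> space M \<Longrightarrow> 0 \<le> u \<Longrightarrow> u < \<phi> x \<Longrightarrow> N u x = 1"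
  using N_pos[of x u] N_le[of u 1 x] by (auto simp: S1)

lemma E_anti: assumes "u \<le> v" shows "E v \<subseteq> E u"
proof
  fix x assume "x \<in> E v"
  then have x: "x \<in> space M" and h: "\<forall>k<N v x. (\<theta>^^k) x \<notin> A" by (auto simp: E_def)
  have "N u x \<le> N v x" by (rule N_mono[OF x assms])
  then show "x \<in> E u" using x h by (auto simp: E_def)
qed

lemma S_meas[measurable]: "S n \<in> borel_measurable M"
  unfolding birkhoff_sum_def using funpow_meas[OF th] by measurable

lemma fst_flow:
  assumes x: "x \<in> space M" and s: "0 \<le> s" "s < \<phi> x" and t: "0 \<le> \<tau>"
  shows "fst (special_flow \<theta> \<phi> \<tau> (x, s)) = (\<theta>^^(N (s+\<tau>) x - 1)) x"
proof (cases "\<tau> < \<phi> x - s")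
  case True
  then have "N (s+\<tau>) x = 1" using N_eq1[OF x, of "s+\<tau>"] s t by auto
  then show ?thesis using True by (simp add: special_flow_def)
next
  case False
  then show ?thesis by (simp add: special_flow_def Let_def)
qed

lemma survivor_eq:
  assumes t: "0 \<le> t"
  shows "survivor_set M \<theta> \<phi> A t = {(x,s). x \<in> space M \<and> 0 \<le> s \<and> s < \<phi> x \<and> x \<in> E (s+t)}"
proof (intro set_eqI iffI)
  fix p assume p: "p \<in> survivor_set M \<theta> \<phi> A t"
  obtain x s where pe: "p = (x,s)" by (cases p)
  have x: "x \<in> space M" and s: "0 \<le> s" "s < \<phi> x" using p pe
    by (auto simp: survivor_set_def special_flow_space_def)
  have hit: "\<And>\<tau>. 0 \<le> \<tau> \<Longrightarrow> \<tau> \<le> t \<Longrightarrow> (\<theta>^^(N (s+\<tau>) x - 1)) x \<notin> A"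
    using p pe fst_flow[OF x s] by (auto simp: survivor_set_def)
  have "\<forall>k < N (s+t) x. (\<theta>^^k) x \<notin> A"
  proof (intro allI impI)
    fix k assume k: "k < N (s+t) x"
    define u where "u = max s (S k x)"
    have Sk: "S k x \<le> s + t" using N_less[OF k] .
    have "S (Suc k) x > u"
    proof -
      have "S (Suc k) x > S k x" using phic[OF orb_space[OF x, of k]] cpos by (simp add: S_Suc)
      moreover have "S (Suc k) x \<ge> S 1 x" using S_mono[OF x, of "Suc 0" "Suc k"] by simp
      ultimately show ?thesis using s by (auto simp: u_def S1)
    qed
    then have "N u x \<le> Suc k" by (rule N_le)
    moreover have "\<not> N u x \<le> k"
    proof
      assume "N u x \<le> k"
      then have "S (N u x) x \<le> S k x" by (rule S_mono[OF x])
      then show False using N_gt[OF x, of u] by (simp add: u_def)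
    qed
    ultimately have "N u x = Suc k" by simp
    moreover have "u = s + (u - s)" by simp
    ultimately show "(\<theta>^^k) x \<notin> A" using hit[of "u - s"] Sk t by (auto simp: u_def)
  qed
  then show "p \<in> {(x,s). x \<in> space M \<and> 0 \<le> s \<and> s < \<phi> x \<and> x \<in> E (s+t)}"
    using pe x s by (auto simp: E_def)
next
  fix p assume p: "p \<in> {(x,s). x \<in> space M \<and> 0 \<le> s \<and> s < \<phi> x \<and> x \<in> E (s+t)}"
  obtain x s where pe: "p = (x,s)" by (cases p)
  have x: "x \<in> space M" and s: "0 \<le> s" "s < \<phi> x" and e: "x \<in> E (s+t)" using p pe by auto
  show "p \<in> survivor_set M \<theta> \<phi> A t"
    unfolding survivor_set_def
  proof (safe)
    show "p \<in> special_flow_space M \<phi>" using pe x s by (simp add: special_flow_space_def)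
    fix \<tau> assume tau: "\<tau> \<in> {0..t}" and h: "fst (special_flow \<theta> \<phi> \<tau> p) \<in> A"
    have "N (s+\<tau>) x \<le> N (s+t) x" using N_mono[OF x] tau by auto
    moreover have "N (s+\<tau>) x \<ge> 1" using N_pos[OF x] s tau by auto
    ultimately have "N (s+\<tau>) x - 1 < N (s+t) x" by linarith
    then show False using e h fst_flow[OF x s, of \<tau>] tau pe by (auto simp: E_def)
  qed
qed


lemma N_meas[measurable]: "(\<lambda>p. N (snd p + t) (fst p)) \<in> measurable (M \<Otimes>\<^sub>M lborel) (count_space UNIV)"
  unfolding lap_number_def by measurable

lemma N_meas1[measurable]: "(\<lambda>x. N u x) \<in> measurable M (count_space UNIV)"
  unfolding lap_number_def by measurable

lemma funpow_meas'[measurable]: "(\<theta>^^k) \<in> M \<rightarrow>\<^sub>M M"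
  by (rule funpow_meas[OF th])

lemma E_meas[measurable]: "E u \<in> sets M"
proof -
  have "E u = {x \<in> space M. \<forall>k. k < N u x \<longrightarrow> (\<theta>^^k) x \<notin> A}" by (auto simp: E_def)
  also have "\<dots> \<in> sets M" by measurable
  finally show ?thesis .
qed

lemma surv_meas: assumes "0 \<le> t" shows "survivor_set M \<theta> \<phi> A t \<in> sets (M \<Otimes>\<^sub>M lborel)"
proof -
  have "survivor_set M \<theta> \<phi> A t = {p \<in> space (M \<Otimes>\<^sub>M lborel). 0 \<le> snd p \<and> snd p < \<phi> (fst p) \<and>
     (\<forall>k. k < N (snd p + t) (fst p) \<longrightarrow> (\<theta>^^k) (fst p) \<notin> A)}"
    unfolding survivor_eq[OF assms] by (auto simp: space_pair_measure E_def)
  also have "\<dots> \<in> sets (M \<Otimes>\<^sub>M lborel)" by measurable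
  finally show ?thesis .
qed

lemma times_meas: "B \<in> sets M \<Longrightarrow> emeasure M B < \<infinity> \<Longrightarrow> 0 \<le> a \<Longrightarrow>
   measure (M \<Otimes>\<^sub>M lborel) (B \<times> {0..a}) = measure M B * a"
  "B \<in> sets M \<Longrightarrow> emeasure M B < \<infinity> \<Longrightarrow> 0 \<le> a \<Longrightarrow>
   B \<times> {0..a} \<in> fmeasurable (M \<Otimes>\<^sub>M lborel)"
  "B \<in> sets M \<Longrightarrow> emeasure M B < \<infinity> \<Longrightarrow> 0 \<le> a \<Longrightarrow>
   measure (M \<Otimes>\<^sub>M lborel) (B \<times> {0..<a}) = measure M B * a"
  by (auto simp: measure_def lborel.emeasure_pair_measure_Times enn2real_mult fmeasurable_def ennreal_mult_less_top)

lemma bounds: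
  assumes fin: "finite_measure M" and K: "\<And>x. x \<in> space M \<Longrightarrow> \<phi> x \<le> K" and Kc: "c \<le> K" and t: "0 \<le> t"
  shows "survival M \<theta> \<phi> A t \<le> K * measure M (E t)"
    "c * measure M (E (t + K)) \<le> survival M \<theta> \<phi> A t"
    "0 \<le> survival M \<theta> \<phi> A t"
proof -
  have fE: "emeasure M (E u) < \<infinity>" for u by (simp add: less_top[symmetric] finite_measure.emeasure_finite[OF fin])
  have K0: "0 \<le> K" using Kc cpos by simp
  have sub: "survivor_set M \<theta> \<phi> A t \<subseteq> E t \<times> {0..K}"
  proof
    fix p assume "p \<in> survivor_set M \<theta> \<phi> A t"
    then obtain x s where p: "p = (x,s)" "x \<in> space M" "0 \<le> s" "s < \<phi> x" "x \<in> E (s+t)"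
      unfolding survivor_eq[OF t] by auto
    have "x \<in> E t" using E_anti[of t "s+t"] p by auto
    then show "p \<in> E t \<times> {0..K}" using p K[of x] by auto
  qed
  show "survival M \<theta> \<phi> A t \<le> K * measure M (E t)"
    unfolding survival_def using measure_mono_fmeasurable[OF sub surv_meas[OF t] times_meas(2)[OF E_meas fE K0]]
      times_meas(1)[OF E_meas fE K0] by (simp add: mult.commute)
  have sub2: "E (t + K) \<times> {0..<c} \<subseteq> survivor_set M \<theta> \<phi> A t"
  proof
    fix p assume "p \<in> E (t + K) \<times> {0..<c}"
    then obtain x s where p: "p = (x,s)" "x \<in> E (t+K)" "0 \<le> s" "s < c" by auto
    have x: "x \<in> space M" using p by (auto simp: E_def)
    have "x \<in> E (s+t)" using E_anti[of "s+t" "t+K"] p Kc by auto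
    then show "p \<in> survivor_set M \<theta> \<phi> A t" unfolding survivor_eq[OF t] using p x phic[OF x] by auto
  qed
  have fm: "survivor_set M \<theta> \<phi> A t \<in> fmeasurable (M \<Otimes>\<^sub>M lborel)"
    using fmeasurableI2[OF times_meas(2)[OF E_meas fE K0] sub surv_meas[OF t]] .
  show "c * measure M (E (t + K)) \<le> survival M \<theta> \<phi> A t"
    unfolding survival_def using measure_mono_fmeasurable[OF sub2 _ fm] times_meas(3)[OF E_meas fE, of c] cpos
    by (simp add: mult.commute)
  show "0 \<le> survival M \<theta> \<phi> A t" by (simp add: survival_def)
qed

end

definition Qf :: "(real \<Rightarrow> real) \<Rightarrow> real \<Rightarrow> ereal" where
  "Qf f t = (if f t > 0 then ereal (- ln (f t) / t) else \<infinity>)"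

lemma escape_Qf: "escape_quot M \<theta> \<phi> A = Qf (survival M \<theta> \<phi> A)"
  by (auto simp: escape_quot_def Qf_def fun_eq_iff)

lemma L1:
  fixes f g :: "real \<Rightarrow> real"
  assumes lf: "(Qf f \<longlongrightarrow> rf) at_top" and lg: "(Qf g \<longlongrightarrow> rg) at_top"
    and C: "C > 0" and D: "D \<ge> 0" and ev: "eventually (\<lambda>t. f t \<le> C * g (t - D)) at_top"
  shows "rg \<le> rf"
proof -
  define h where "h t = ereal (- ln C / t) + ereal ((t - D) / t) * Qf g (t - D)" for t
  have lim1: "((\<lambda>t. Qf g (t - D)) \<longlongrightarrow> rg) at_top"
    by (rule filterlim_compose[OF lg]) real_asymp
  have lim2: "((\<lambda>t. ereal ((t - D) / t)) \<longlongrightarrow> ereal 1) at_top"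
    by (intro tendsto_ereal) real_asymp
  have lim3: "((\<lambda>t. ereal (- ln C / t)) \<longlongrightarrow> ereal 0) at_top"
    by (intro tendsto_ereal) real_asymp
  have "(h \<longlongrightarrow> ereal 0 + ereal 1 * rg) at_top"
    unfolding h_def by (intro tendsto_add_ereal_general lim3 tendsto_mult_ereal lim2 lim1) auto
  then have limh: "(h \<longlongrightarrow> rg) at_top" by simp
  have "eventually (\<lambda>t. h t \<le> Qf f t) at_top"
    using ev eventually_gt_at_top[of "D + 1"]
  proof eventually_elim
    case (elim t)
    have t0: "t > 0" "t - D > 0" using elim D by auto
    show ?case
    proof (cases "f t > 0")
      case True
      then have "C * g (t - D) > 0" using elim by linarith
      then have g0: "g (t - D) > 0" using C by (rule zero_less_mult_pos)
      have "ln (f t) \<le> ln (C * g (t - D))" using True elim by simp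
      also have "\<dots> = ln C + ln (g (t - D))" using C g0 by (simp add: ln_mult)
      finally have "- ln C - ln (g (t - D)) \<le> - ln (f t)" by simp
      then have "(- ln C - ln (g (t - D))) / t \<le> - ln (f t) / t" by (intro divide_right_mono) (use t0 in auto)
      moreover have "- ln C / t + (t - D) / t * (- ln (g (t - D)) / (t - D)) = (- ln C - ln (g (t - D))) / t"
        using t0 by (simp add: field_simps)
      ultimately show ?thesis using True g0 by (simp add: h_def Qf_def)
    next
      case False
      then show ?thesis by (simp add: Qf_def)
    qed
  qed
  then show ?thesis using tendsto_le[OF _ lf limh] by simp
qed

lemma L2:
  fixes f g :: "real \<Rightarrow> real"
  assumes lg: "(Qf g \<longlongrightarrow> r) at_top" and l: "l > 0"
    and ev: "\<And>t. t > 0 \<Longrightarrow> f t = l * g (t / l)"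
  shows "(Qf f \<longlongrightarrow> ereal (1 / l) * r) at_top"
proof -
  have lim1: "((\<lambda>t. Qf g (t / l)) \<longlongrightarrow> r) at_top"
    by (rule filterlim_compose[OF lg]) (use l in real_asymp)
  have lim3: "((\<lambda>t. ereal (- ln l / t)) \<longlongrightarrow> ereal 0) at_top"
    by (intro tendsto_ereal) real_asymp
  have "((\<lambda>t. ereal (- ln l / t) + ereal (1 / l) * Qf g (t / l)) \<longlongrightarrow> ereal 0 + ereal (1 / l) * r) at_top"
    by (intro tendsto_add_ereal_general lim3 tendsto_cmult_ereal lim1) auto
  then have lim: "((\<lambda>t. ereal (- ln l / t) + ereal (1 / l) * Qf g (t / l)) \<longlongrightarrow> ereal (1 / l) * r) at_top"
    by simp
  have "eventually (\<lambda>t. ereal (- ln l / t) + ereal (1 / l) * Qf g (t / l) = Qf f t) at_top"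
    using eventually_gt_at_top[of 0]
  proof eventually_elim
    case (elim t)
    show ?case
    proof (cases "g (t / l) > 0")
      case True
      then have "f t > 0" using ev[OF elim] l by simp
      moreover have "- ln l / t + 1 / l * (- ln (g (t / l)) / (t / l)) = - ln (f t) / t"
        using ev[OF elim] l True elim by (simp add: field_simps ln_mult)
      ultimately show ?thesis using True by (simp add: Qf_def)
    next
      case False
      then have "\<not> f t > 0" using ev[OF elim] l by (simp add: mult_le_0_iff not_less)
      then show ?thesis using False l by (simp add: Qf_def)
    qed
  qed
  then show ?thesis using Lim_transform_eventually[OF lim] by blast
qed


lemma scale_surv:
  assumes "ceil M \<theta> \<phi> c A" and l: "l > 0" and t: "0 \<le> t"
  shows "survival M \<theta> (\<lambda>x. l * \<phi> x) A t = l * survival M \<theta> \<phi> A (t / l)"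
proof -
  interpret P: ceil M \<theta> \<phi> c A by fact
  interpret L: ceil M \<theta> "\<lambda>x. l * \<phi> x" "l * c" A
    using P.phic l P.cpos by unfold_locales (auto)
  have bs: "birkhoff_sum \<theta> (\<lambda>x. l * \<phi> x) n x = l * P.S n x" for n x
    by (simp add: birkhoff_sum_def sum_distrib_left)
  have Neq: "L.N u x = P.N (u / l) x" for u x
    unfolding lap_number_def bs using l by (simp add: pos_divide_less_eq mult.commute)
  have Eeq: "L.E u = P.E (u / l)" for u
    by (simp add: L.E_def P.E_def Neq)
  have tl: "0 \<le> t / l" using t l by simp
  define X where "X = survivor_set M \<theta> \<phi> A (t / l)"
  have Xm: "X \<in> sets (M \<Otimes>\<^sub>M lborel)" unfolding X_def by (rule P.surv_meas[OF tl])
  have Ym: "survivor_set M \<theta> (\<lambda>x. l * \<phi> x) A t \<in> sets (M \<Otimes>\<^sub>M lborel)" by (rule L.surv_meas[OF t])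
  have slice: "Pair x -` survivor_set M \<theta> (\<lambda>x. l * \<phi> x) A t = (\<lambda>s. (1 / l) * s) -` (Pair x -` X)" for x
  proof -
    have e1: "s / l + t / l = (s + t) / l" for s using l by (simp add: add_divide_distrib)
    have e2: "(0 \<le> s / l) = (0 \<le> s)" for s using l by (simp add: zero_le_divide_iff)
    have e3: "(s / l < \<phi> x) = (s < l * \<phi> x)" for s using l
      by (simp add: pos_divide_less_eq mult.commute)
    show ?thesis
      unfolding X_def L.survivor_eq[OF t] P.survivor_eq[OF tl] Eeq
      by (simp add: vimage_def e1 e2 e3)
  qed
  have scl: "emeasure lborel ((\<lambda>s. (1 / l) * s) -` B) = ennreal l * emeasure lborel B" if B: "B \<in> sets borel" for B
  proof -
    have "emeasure lborel ((\<lambda>s. (1 / l) * s) -` B) = emeasure lborel ((\<lambda>s. (1 / l) * s) -` B \<inter> space lborel)"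
      by simp
    also have "\<dots> = emeasure (distr lborel borel ((*) (1 / l))) B"
      using B by (subst emeasure_distr) auto
    also have "\<dots> = emeasure (density lborel (\<lambda>_. ennreal l)) B"
      using l by (subst lborel_distr_mult) auto
    also have "\<dots> = ennreal l * emeasure lborel B"
      using B by (simp add: emeasure_density nn_integral_cmult_indicator)
    finally show ?thesis .
  qed
  have "emeasure (M \<Otimes>\<^sub>M lborel) (survivor_set M \<theta> (\<lambda>x. l * \<phi> x) A t)
      = (\<integral>\<^sup>+x. emeasure lborel (Pair x -` survivor_set M \<theta> (\<lambda>x. l * \<phi> x) A t) \<partial>M)"
    by (rule lborel.emeasure_pair_measure_alt[OF Ym])
  also have "\<dots> = (\<integral>\<^sup>+x. ennreal l * emeasure lborel (Pair x -` X) \<partial>M)"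
    unfolding slice using sets_Pair1[OF Xm] by (intro nn_integral_cong scl) auto
  also have "\<dots> = ennreal l * (\<integral>\<^sup>+x. emeasure lborel (Pair x -` X) \<partial>M)"
    by (rule nn_integral_cmult) (use Xm in measurable)
  also have "\<dots> = ennreal l * emeasure (M \<Otimes>\<^sub>M lborel) X"
    by (simp add: lborel.emeasure_pair_measure_alt[OF Xm])
  finally show ?thesis unfolding survival_def measure_def X_def
    using l by (simp add: enn2real_mult)
qed

lemma le_surv:
  assumes "ceil M \<theta> \<phi> c A" "ceil M \<theta> \<psi> d A" and fin: "finite_measure M"
    and K: "\<And>x. x \<in> space M \<Longrightarrow> \<psi> x \<le> K" "d \<le> K"
    and le: "\<And>x. x \<in> space M \<Longrightarrow> \<phi> x \<le> \<psi> x" and t: "0 \<le> t"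
  shows "survival M \<theta> \<phi> A t \<le> survival M \<theta> \<psi> A t"
proof -
  interpret P: ceil M \<theta> \<phi> c A by fact
  interpret Q: ceil M \<theta> \<psi> d A by fact
  have Sle: "P.S n x \<le> Q.S n x" if "x \<in> space M" for n x
    unfolding birkhoff_sum_def using le[OF P.orb_space[OF that]] by (intro sum_mono) auto
  have Nle: "Q.N u x \<le> P.N u x" if "x \<in> space M" for u x
    using P.N_gt[OF that, of u] Sle[OF that, of "P.N u x"] by (intro Q.N_le) auto
  have sub: "survivor_set M \<theta> \<phi> A t \<subseteq> survivor_set M \<theta> \<psi> A t"
  proof
    fix p assume "p \<in> survivor_set M \<theta> \<phi> A t"
    then obtain x s where p: "p = (x,s)" "x \<in> space M" "0 \<le> s" "s < \<phi> x" "x \<in> P.E (s+t)"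
      unfolding P.survivor_eq[OF t] by auto
    have "x \<in> Q.E (s+t)" using p(5) Nle[OF p(2), of "s+t"] p(2) by (auto simp: P.E_def Q.E_def)
    moreover have "s < \<psi> x" using p le[OF p(2)] by linarith
    ultimately show "p \<in> survivor_set M \<theta> \<psi> A t" unfolding Q.survivor_eq[OF t] using p by auto
  qed
  have fE: "emeasure M (Q.E t) < \<infinity>" by (simp add: less_top[symmetric] finite_measure.emeasure_finite[OF fin])
  have K0: "0 \<le> K" using K Q.cpos by simp
  have sub2: "survivor_set M \<theta> \<psi> A t \<subseteq> Q.E t \<times> {0..K}"
  proof
    fix p assume "p \<in> survivor_set M \<theta> \<psi> A t"
    then obtain x s where p: "p = (x,s)" "x \<in> space M" "0 \<le> s" "s < \<psi> x" "x \<in> Q.E (s+t)"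
      unfolding Q.survivor_eq[OF t] by auto
    have "x \<in> Q.E t" using Q.E_anti[of t "s+t"] p by auto
    then show "p \<in> Q.E t \<times> {0..K}" using p K(1)[of x] by auto
  qed
  have fm: "survivor_set M \<theta> \<psi> A t \<in> fmeasurable (M \<Otimes>\<^sub>M lborel)"
    using fmeasurableI2[OF Q.times_meas(2)[OF Q.E_meas fE K0] sub2 Q.surv_meas[OF t]] .
  show ?thesis unfolding survival_def by (rule measure_mono_fmeasurable[OF sub P.surv_meas[OF t] fm])
qed

lemma cohom_surv:
  assumes "ceil M \<theta> \<phi> c A" "ceil M \<theta> \<psi> d A" and fin: "finite_measure M"
    and Kp: "\<And>x. x \<in> space M \<Longrightarrow> \<phi> x \<le> K1" "c \<le> K1"
    and Kq: "\<And>x. x \<in> space M \<Longrightarrow> \<psi> x \<le> K2" "d \<le> K2"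
    and g: "\<And>x. x \<in> space M \<Longrightarrow> \<bar>g x\<bar> \<le> B"
    and coh: "\<And>x. x \<in> space M \<Longrightarrow> \<psi> x = \<phi> x + g (\<theta> x) - g x"
    and B: "0 \<le> B" and t: "2 * B + K1 \<le> t"
  shows "survival M \<theta> \<psi> A t \<le> (K2 / c) * survival M \<theta> \<phi> A (t - (2 * B + K1))"
proof -
  interpret P: ceil M \<theta> \<phi> c A by fact
  interpret Q: ceil M \<theta> \<psi> d A by fact
  have tel: "Q.S n x = P.S n x + g ((\<theta>^^n) x) - g x" if "x \<in> space M" for n x
  proof (induction n)
    case (Suc n)
    then show ?case using coh[OF P.orb_space[OF that, of n]] by (simp add: P.S_Suc Q.S_Suc)
  qed simp
  have Nle: "P.N (u - 2 * B) x \<le> Q.N u x" if x: "x \<in> space M" for u x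
  proof (rule P.N_le)
    have "Q.S (Q.N u x) x > u" by (rule Q.N_gt[OF x])
    moreover have "\<bar>g ((\<theta>^^(Q.N u x)) x)\<bar> \<le> B" "\<bar>g x\<bar> \<le> B" using g P.orb_space[OF x] x by auto
    ultimately show "P.S (Q.N u x) x > u - 2 * B" using tel[OF x, of "Q.N u x"] by linarith
  qed
  have Esub: "Q.E u \<subseteq> P.E (u - 2 * B)" for u
  proof
    fix x assume "x \<in> Q.E u"
    then show "x \<in> P.E (u - 2 * B)" using Nle[of x u] by (auto simp: Q.E_def P.E_def)
  qed
  have t0: "0 \<le> t" "0 \<le> t - (2 * B + K1)" using t B Kp P.cpos by auto
  have "survival M \<theta> \<psi> A t \<le> K2 * measure M (Q.E t)" by (rule Q.bounds(1)[OF fin Kq t0(1)])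
  also have "\<dots> \<le> K2 * measure M (P.E (t - 2 * B))"
    using Kq Q.cpos fin
    by (intro mult_left_mono finite_measure.finite_measure_mono Esub) auto
  also have "\<dots> = (K2 / c) * (c * measure M (P.E (t - (2 * B + K1) + K1)))"
    using P.cpos by (simp add: algebra_simps)
  also have "\<dots> \<le> (K2 / c) * survival M \<theta> \<phi> A (t - (2 * B + K1))"
    using Kq Q.cpos P.cpos by (intro mult_left_mono P.bounds(2)[OF fin Kp t0(2)]) auto
  finally show ?thesis .
qed

theorem proposition3p11:
  fixes M :: "'a measure" and \<theta> :: "'a \<Rightarrow> 'a" and \<phi> \<psi> :: "'a \<Rightarrow> real"
    and A :: "'a set" and \<rho>\<phi> \<rho>\<psi> :: ereal
  assumes "prob_space M"
    and "measure_preserving_endo M \<theta>"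
    and "ceiling_fun M \<phi>" and "bounded_fun M \<phi>"
    and "ceiling_fun M \<psi>" and "bounded_fun M \<psi>"
    and "hole M \<theta> A"
    and "has_escape_rate M \<theta> \<phi> A \<rho>\<phi>"
    and "has_escape_rate M \<theta> \<psi> A \<rho>\<psi>"
  shows "((\<forall>x\<in>space M. \<phi> x \<le> \<psi> x) \<longrightarrow> \<rho>\<phi> \<ge> \<rho>\<psi>)
    \<and> (\<forall>l>0. has_escape_rate M \<theta> (\<lambda>x. l * \<phi> x) A (ereal (1 / l) * \<rho>\<phi>))
    \<and> ((\<exists>g. g \<in> borel_measurable M \<and> bounded_fun M g \<and>
          (\<forall>x\<in>space M. \<psi> x = \<phi> x + g (\<theta> x) - g x)) \<longrightarrow> \<rho>\<psi> = \<rho>\<phi>)"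
proof -
  have fin: "finite_measure M" using assms(1) by (simp add: prob_space_def)
  have th: "\<theta> \<in> M \<rightarrow>\<^sub>M M" using assms(2) by (simp add: measure_preserving_endo_def)
  have Am: "A \<in> sets M" using assms(7) by (simp add: hole_def)
  obtain c1 where c1: "c1 > 0" "\<And>x. x \<in> space M \<Longrightarrow> c1 \<le> \<phi> x" and pm: "\<phi> \<in> borel_measurable M"
    using assms(3) by (auto simp: ceiling_fun_def)
  obtain c2 where c2: "c2 > 0" "\<And>x. x \<in> space M \<Longrightarrow> c2 \<le> \<psi> x" and qm: "\<psi> \<in> borel_measurable M"
    using assms(5) by (auto simp: ceiling_fun_def)
  obtain B1 where B1: "\<And>x. x \<in> space M \<Longrightarrow> \<bar>\<phi> x\<bar> \<le> B1" using assms(4) by (auto simp: bounded_fun_def)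
  obtain B2 where B2: "\<And>x. x \<in> space M \<Longrightarrow> \<bar>\<psi> x\<bar> \<le> B2" using assms(6) by (auto simp: bounded_fun_def)
  define K1 where "K1 = max B1 c1"
  define K2 where "K2 = max B2 c2"
  have K1: "\<And>x. x \<in> space M \<Longrightarrow> \<phi> x \<le> K1" "c1 \<le> K1" using B1 by (force simp: K1_def)+
  have K2: "\<And>x. x \<in> space M \<Longrightarrow> \<psi> x \<le> K2" "c2 \<le> K2" using B2 by (force simp: K2_def)+
  have CP: "ceil M \<theta> \<phi> c1 A" using th pm c1 Am by unfold_locales auto
  have CQ: "ceil M \<theta> \<psi> c2 A" using th qm c2 Am by unfold_locales auto
  have lp: "(Qf (survival M \<theta> \<phi> A) \<longlongrightarrow> \<rho>\<phi>) at_top"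
    using assms(8) by (simp add: has_escape_rate_def escape_Qf)
  have lq: "(Qf (survival M \<theta> \<psi> A) \<longlongrightarrow> \<rho>\<psi>) at_top"
    using assms(9) by (simp add: has_escape_rate_def escape_Qf)
  have P1: "\<rho>\<phi> \<ge> \<rho>\<psi>" if le: "\<forall>x\<in>space M. \<phi> x \<le> \<psi> x"
  proof (rule L1[OF lp lq, of 1 0])
    show "\<forall>\<^sub>F t in at_top. survival M \<theta> \<phi> A t \<le> 1 * survival M \<theta> \<psi> A (t - 0)"
      using eventually_ge_at_top[of 0]
      by eventually_elim (use le_surv[OF CP CQ fin K2] le in auto)
  qed auto
  have P2: "has_escape_rate M \<theta> (\<lambda>x. l * \<phi> x) A (ereal (1 / l) * \<rho>\<phi>)" if l: "l > 0" for l
    unfolding has_escape_rate_def escape_Qf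
    by (rule L2[OF lp l]) (use scale_surv[OF CP l] in auto)
  have P3: "\<rho>\<psi> = \<rho>\<phi>" if ex: "\<exists>g. g \<in> borel_measurable M \<and> bounded_fun M g \<and>
          (\<forall>x\<in>space M. \<psi> x = \<phi> x + g (\<theta> x) - g x)"
  proof -
    obtain g Bg where g: "\<And>x. x \<in> space M \<Longrightarrow> \<bar>g x\<bar> \<le> Bg"
      and coh: "\<And>x. x \<in> space M \<Longrightarrow> \<psi> x = \<phi> x + g (\<theta> x) - g x"
      using ex by (auto simp: bounded_fun_def)
    define B where "B = max Bg 0"
    have gB: "\<And>x. x \<in> space M \<Longrightarrow> \<bar>g x\<bar> \<le> B" "0 \<le> B" using g by (force simp: B_def)+
    have gB': "\<And>x. x \<in> space M \<Longrightarrow> \<bar>(- g x)\<bar> \<le> B" using gB by auto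
    have coh': "\<And>x. x \<in> space M \<Longrightarrow> \<phi> x = \<psi> x + (- g (\<theta> x)) - (- g x)" using coh by auto
    have "\<rho>\<phi> \<le> \<rho>\<psi>"
    proof (rule L1[OF lq lp, of "K2 / c1" "2 * B + K1"])
      show "\<forall>\<^sub>F t in at_top. survival M \<theta> \<psi> A t \<le> K2 / c1 * survival M \<theta> \<phi> A (t - (2 * B + K1))"
        using eventually_ge_at_top[of "2 * B + K1"]
        by eventually_elim (rule cohom_surv[OF CP CQ fin K1 K2 gB(1) coh gB(2)])
      show "0 < K2 / c1" using K2 c1 c2 by simp
      show "0 \<le> 2 * B + K1" using gB K1 c1 by simp
    qed
    moreover have "\<rho>\<psi> \<le> \<rho>\<phi>"
    proof (rule L1[OF lp lq, of "K1 / c2" "2 * B + K2"])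
      show "\<forall>\<^sub>F t in at_top. survival M \<theta> \<phi> A t \<le> K1 / c2 * survival M \<theta> \<psi> A (t - (2 * B + K2))"
        using eventually_ge_at_top[of "2 * B + K2"]
        by eventually_elim (rule cohom_surv[where g="\<lambda>x. - g x", OF CQ CP fin K2 K1 gB' coh' gB(2)])
      show "0 < K1 / c2" using K1 c1 c2 by simp
      show "0 \<le> 2 * B + K2" using gB K2 c2 by simp
    qed
    ultimately show ?thesis by simp
  qed
  show ?thesis using P1 P2 P3 by blast
qed

end
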